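(* Let $n\in\mathbb{N}_{\geq 2}$, $k_n=\lceil\log_2 n\rceil$, and suppose $n\neq 3\cdot 2^{k_n-2}$. Then the GFB trees $T_{n-1}^{gfb},T_n^{gfb},T_{n+1}^{gfb}$ have a common maximal pending subtree which is fully balanced: (i) if $n\in(2^{k_n-1},3\cdot2^{k_n-2})$, this common subtree is the fully balanced tree of height $k_n-2$; (ii) if $n\in(3\cdot2^{k_n-2},2^{k_n}]$, it is the fully balanced tree of height $k_n-1$.
   Context: A rooted binary tree with $n\geq 2$ leaves is a rooted tree whose root has degree 2 and all other internal nodes have degree 3; for $n=1$ it is a single node. Trees are considered up to isomorphism. The maximal pending subtrees of a tree with at least 2 leaves are the two subtrees rooted at the children of the root. The fully balanced tree of height $k$ is the rooted binary tree with $2^k$ leaves all at depth $k$. The GFB tree $T_n^{gfb}$ is the output of: start with $n$ single-node trees; while more than one tree remains, remove a tree $u$ of minimal size (number of leaves), then remove a tree $v$ of minimal size among the remaining ones, and insert the tree with a new root whose children are the roots of $u$ and $v$; output the remaining tree. *)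

theory Defs
  imports Complex_Main "HOL-Library.Multiset"
begin

text \<open>Rooted binary trees (ordered representation; isomorphism = swapping children).\<close>
datatype btree = BLeaf | BNode btree btree

fun leaves :: "btree \<Rightarrow> nat" where
  "leaves BLeaf = 1"
| "leaves (BNode l r) = leaves l + leaves r"

inductive iso :: "btree \<Rightarrow> btree \<Rightarrow> bool" where
  iso_leaf: "iso BLeaf BLeaf"
| iso_node: "iso l l' \<Longrightarrow> iso r r' \<Longrightarrow> iso (BNode l r) (BNode l' r')"
| iso_swap: "iso l r' \<Longrightarrow> iso r l' \<Longrightarrow> iso (BNode l r) (BNode l' r')"

fun fb :: "nat \<Rightarrow> btree" where
  "fb 0 = BLeaf"
| "fb (Suc k) = BNode (fb k) (fb k)"

text \<open>S is (isomorphic to) a maximal pending subtree of T. Convention for the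
  single-node tree (only relevant for T_1 when n = 2): its pending subtree is itself.\<close>
fun has_mps :: "btree \<Rightarrow> btree \<Rightarrow> bool" where
  "has_mps BLeaf S = iso BLeaf S"
| "has_mps (BNode l r) S = (iso l S \<or> iso r S)"

inductive gfb_step :: "btree multiset \<Rightarrow> btree multiset \<Rightarrow> bool" where
  "u \<in># M \<Longrightarrow> (\<forall>w\<in>#M. leaves u \<le> leaves w) \<Longrightarrow>
   v \<in># M - {#u#} \<Longrightarrow> (\<forall>w\<in>#M - {#u#}. leaves v \<le> leaves w) \<Longrightarrow>
   gfb_step M (add_mset (BNode u v) (M - {#u#} - {#v#}))"

definition gfb_tree :: "nat \<Rightarrow> btree \<Rightarrow> bool" where
  "gfb_tree n T \<longleftrightarrow> gfb_step\<^sup>*\<^sup>* (replicate_mset n BLeaf) {#T#}"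

end

theory Submission
  imports Defs
begin

lemma leaves_fb[simp]: "leaves (fb j) = 2 ^ j"
  by (induction j) auto

declare fb.simps(2)[simp del]

lemma iso_refl: "iso t t"
  by (induction t) (auto intro: iso.intros)

definition ginv :: "btree multiset \<Rightarrow> bool" where
  "ginv M \<longleftrightarrow>
    (\<exists>j c0 c1. M = replicate_mset c0 (fb j) + replicate_mset c1 (fb (Suc j))) \<or>
    (\<exists>j c0 c1 R. M = add_mset R (replicate_mset c0 (fb j) + replicate_mset c1 (fb (Suc j)))
        \<and> 2 ^ j < leaves R \<and> leaves R < 2 ^ Suc j)"

lemma ginvA:
  assumes M: "M = replicate_mset c0 (fb j) + replicate_mset c1 (fb (Suc j))"
    and u: "u \<in># M" "\<forall>w\<in>#M. leaves u \<le> leaves w"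
    and v: "v \<in># M - {#u#}" "\<forall>w\<in>#M - {#u#}. leaves v \<le> leaves w"
  shows "ginv (add_mset (BNode u v) (M - {#u#} - {#v#}))"
proof (cases c0)
  case 0
  then have u1: "u = fb (Suc j)" using u M by (auto split: if_splits)
  then obtain c where c: "c1 = Suc c" using u M 0 by (cases c1) auto
  then have v1: "v = fb (Suc j)" using v M 0 u1 by (auto split: if_splits)
  then obtain d where d: "c = Suc d" using v M 0 u1 c by (cases c) auto
  have "add_mset (BNode u v) (M - {#u#} - {#v#}) =
     replicate_mset d (fb (Suc j)) + replicate_mset 1 (fb (Suc (Suc j)))"
    using M 0 c d u1 v1 by (simp add: fb.simps)
  then show ?thesis unfolding ginv_def by blast
next
  case (Suc c)
  have "fb j \<in># M" using M Suc by simp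
  then have "leaves u \<le> 2 ^ j" using u by force
  then have u1: "u = fb j" using u M by (auto split: if_splits)
  show ?thesis
  proof (cases c)
    case 0
    then have Mu: "M - {#u#} = replicate_mset c1 (fb (Suc j))" using M Suc u1 by simp
    then have v1: "v = fb (Suc j)" using v by (auto split: if_splits)
    then obtain d where d: "c1 = Suc d" using v Mu by (cases c1) auto
    have "add_mset (BNode u v) (M - {#u#} - {#v#}) =
       add_mset (BNode (fb j) (fb (Suc j))) (replicate_mset d (fb (Suc j)) + replicate_mset 0 (fb (Suc (Suc j))))"
      using Mu d u1 v1 by simp
    moreover have "2 ^ Suc j < leaves (BNode (fb j) (fb (Suc j)))"
      "leaves (BNode (fb j) (fb (Suc j))) < 2 ^ Suc (Suc j)" by simp_all
    ultimately show ?thesis unfolding ginv_def by blast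
  next
    case (Suc d)
    have Mu: "M - {#u#} = add_mset (fb j) (replicate_mset d (fb j) + replicate_mset c1 (fb (Suc j)))"
      using M \<open>c0 = Suc c\<close> Suc u1 by simp
    then have "leaves v \<le> 2 ^ j" using v by force
    then have v1: "v = fb j" using v Mu by (auto split: if_splits)
    have "add_mset (BNode u v) (M - {#u#} - {#v#}) =
       replicate_mset d (fb j) + replicate_mset (Suc c1) (fb (Suc j))"
      using Mu u1 v1 by (simp add: fb.simps)
    then show ?thesis unfolding ginv_def by blast
  qed
qed

lemma ginvB:
  assumes M: "M = add_mset R (replicate_mset c0 (fb j) + replicate_mset c1 (fb (Suc j)))"
    and R: "2 ^ j < leaves R" "leaves R < 2 ^ Suc j"
    and u: "u \<in># M" "\<forall>w\<in>#M. leaves u \<le> leaves w"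
    and v: "v \<in># M - {#u#}" "\<forall>w\<in>#M - {#u#}. leaves v \<le> leaves w"
  shows "ginv (add_mset (BNode u v) (M - {#u#} - {#v#}))"
proof (cases c0)
  case 0
  have "leaves u \<le> leaves R" using u M by simp
  then have u1: "u = R" using u M 0 R by (auto split: if_splits)
  then have Mu: "M - {#u#} = replicate_mset c1 (fb (Suc j))" using M 0 by simp
  then have v1: "v = fb (Suc j)" using v by (auto split: if_splits)
  then obtain d where d: "c1 = Suc d" using v Mu by (cases c1) auto
  have "add_mset (BNode u v) (M - {#u#} - {#v#}) =
     add_mset (BNode R (fb (Suc j))) (replicate_mset d (fb (Suc j)) + replicate_mset 0 (fb (Suc (Suc j))))"
    using Mu d u1 v1 by simp
  moreover have "2 ^ Suc j < leaves (BNode R (fb (Suc j)))"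
    "leaves (BNode R (fb (Suc j))) < 2 ^ Suc (Suc j)" using R by simp_all
  ultimately show ?thesis unfolding ginv_def by blast
next
  case (Suc c)
  have "fb j \<in># M" using M Suc by simp
  then have "leaves u \<le> 2 ^ j" using u by force
  then have u1: "u = fb j" using u M R by (auto split: if_splits)
  show ?thesis
  proof (cases c)
    case 0
    then have Mu: "M - {#u#} = add_mset R (replicate_mset c1 (fb (Suc j)))" using M Suc u1 by simp
    then have "leaves v \<le> leaves R" using v by force
    then have v1: "v = R" using v Mu R by (auto split: if_splits)
    have "add_mset (BNode u v) (M - {#u#} - {#v#}) =
       add_mset (BNode (fb j) R) (replicate_mset c1 (fb (Suc j)) + replicate_mset 0 (fb (Suc (Suc j))))"
      using Mu u1 v1 by (simp add: fb.simps)
    moreover have "2 ^ Suc j < leaves (BNode (fb j) R)"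
      "leaves (BNode (fb j) R) < 2 ^ Suc (Suc j)" using R by simp_all
    ultimately show ?thesis unfolding ginv_def by blast
  next
    case (Suc d)
    have Mu: "M - {#u#} = add_mset (fb j) (add_mset R (replicate_mset d (fb j) + replicate_mset c1 (fb (Suc j))))"
      using M \<open>c0 = Suc c\<close> Suc u1 by simp
    then have "leaves v \<le> 2 ^ j" using v by force
    then have v1: "v = fb j" using v Mu R by (auto split: if_splits)
    have "add_mset (BNode u v) (M - {#u#} - {#v#}) =
       add_mset R (replicate_mset d (fb j) + replicate_mset (Suc c1) (fb (Suc j)))"
      using Mu u1 v1 by (simp add: fb.simps)
    then show ?thesis unfolding ginv_def using R by blast
  qed
qed


definition sl :: "btree multiset \<Rightarrow> nat" where
  "sl M = sum_mset (image_mset leaves M)"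

lemma decomp:
  assumes "u \<in># M" "v \<in># M - {#u#}"
  shows "M = add_mset u (add_mset v (M - {#u#} - {#v#}))"
  using assms by (metis insert_DiffM)

lemma step_inv:
  assumes "gfb_step M M'" "ginv M"
  shows "ginv M' \<and> sl M' = sl M \<and> size M' + 1 = size M"
  using assms(1)
proof cases
  case (1 u v)
  define K where "K = M - {#u#} - {#v#}"
  have eq: "M' = add_mset (BNode u v) K" using 1 K_def by blast
  have hu: "u \<in># M" "\<forall>w\<in>#M. leaves u \<le> leaves w" using 1 by blast+
  have hv: "v \<in># M - {#u#}" "\<forall>w\<in>#M - {#u#}. leaves v \<le> leaves w" using 1 by blast+
  have d: "M = add_mset u (add_mset v K)" using decomp[OF hu(1) hv(1)] K_def by blast
  have "ginv M'"
    using assms(2) unfolding ginv_def[of M]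
  proof (elim disjE exE conjE)
    fix j c0 c1 assume "M = replicate_mset c0 (fb j) + replicate_mset c1 (fb (Suc j))"
    from ginvA[OF this hu hv] show "ginv M'" unfolding eq K_def .
  next
    fix j c0 c1 R assume "M = add_mset R (replicate_mset c0 (fb j) + replicate_mset c1 (fb (Suc j)))"
      "2 ^ j < leaves R" "leaves R < 2 ^ Suc j"
    from ginvB[OF this hu hv] show "ginv M'" unfolding eq K_def .
  qed
  moreover have "sl M = leaves u + leaves v + sl K" unfolding sl_def by (subst d) simp
  moreover have "sl M' = leaves u + leaves v + sl K" unfolding sl_def eq by simp
  moreover have "size M = size K + 2" by (subst d) simp
  moreover have "size M' = size K + 1" unfolding eq by simp
  ultimately show ?thesis by simp
qed

lemma reach_inv:
  assumes "gfb_step\<^sup>*\<^sup>* A B" "ginv A"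
  shows "ginv B \<and> sl B = sl A"
  using assms by (induction rule: rtranclp_induct) (auto dest: step_inv)

lemma pow_lt: "(a::nat) < b \<Longrightarrow> 2 * 2 ^ a \<le> (2::nat) ^ b"
  by (metis power_Suc power_increasing_iff Suc_leI one_less_numeral_iff semiring_norm(76))

lemma pow_lt2: "Suc (a::nat) < b \<Longrightarrow> 4 * 2 ^ a \<le> (2::nat) ^ b"
  using pow_lt[of "Suc a" b] by simp

lemma fb_eq_iff[simp]: "fb i = fb j \<longleftrightarrow> i = j"
proof
  assume "fb i = fb j"
  then have "leaves (fb i) = leaves (fb j)" by simp
  then show "i = j" by simp
qed simp

lemma five:
  fixes i j :: nat
  obtains "Suc i < j" "4*2^i \<le> (2::nat)^j" | "j = Suc i" | "i = j" | "i = Suc j"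
    | "Suc j < i" "4*2^j \<le> (2::nat)^i"
proof -
  consider "Suc i < j" | "j = Suc i" | "i = j" | "i = Suc j" | "Suc j < i" by linarith
  then show thesis using that pow_lt2[of i j] pow_lt2[of j i] by cases blast+
qed

lemma arA:
  assumes "c0 = 0 \<and> c1 = 2 \<or> c0 = 1 \<and> c1 = 1 \<or> c0 = 2 \<and> c1 = 0"
  shows " (2 * 2 ^ i \<le> c0 * 2 ^ j + c1 * (2 * 2 ^ j) \<and>
         c0 * 2 ^ j + c1 * (2 * 2 ^ j) \<le> (3::nat) * 2 ^ i \<longrightarrow>
         0 < c0 \<and> i = j \<or> 0 < c1 \<and> i = Suc j) \<and>
        (3 * 2 ^ i \<le> c0 * 2 ^ j + c1 * (2 * 2 ^ j) \<and>
         c0 * 2 ^ j + c1 * (2 * 2 ^ j) \<le> (4::nat) * 2 ^ i \<longrightarrow>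
         0 < c0 \<and> Suc i = j \<or> 0 < c1 \<and> i = j)"
proof -
  have pos: "0 < (2::nat) ^ i" "0 < (2::nat) ^ j" by simp_all
  show ?thesis using assms by (cases i j rule: five; elim disjE conjE; simp; (intro conjI impI)?; (use pos in linarith))
qed

lemma arB:
  assumes "c0 = 0 \<and> c1 = 1 \<or> c0 = 1 \<and> c1 = 0" "2 ^ j < r" "r < (2::nat) ^ Suc j"
   and mem: "(0 < c0 \<and> i = j) \<or> (0 < c1 \<and> i = Suc j) \<Longrightarrow> P"
    "(0 < c0 \<and> Suc i = j) \<or> (0 < c1 \<and> i = j) \<Longrightarrow> Q"
  shows "(2 * 2 ^ i \<le> r + c0 * 2^j + c1 * (2 * 2^j) \<and> r + c0 * 2^j + c1 * (2 * 2^j) \<le> 3 * 2 ^ i \<longrightarrow> P) \<and>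
         (3 * 2 ^ i \<le> r + c0 * 2^j + c1 * (2 * 2^j) \<and> r + c0 * 2^j + c1 * (2 * 2^j) \<le> 4 * 2 ^ i \<longrightarrow> Q)"
proof -
  have pos: "0 < (2::nat) ^ i" "0 < (2::nat) ^ j" by simp_all
  show ?thesis using assms(1-3) by (cases i j rule: five; elim disjE conjE; simp; (intro conjI impI)?; (use pos mem in linarith))
qed

lemma final_two:
  assumes "ginv M" "M = {#u, v#}" "sl M = N"
  shows "(2 * 2 ^ i \<le> N \<and> N \<le> 3 * 2 ^ i \<longrightarrow> fb i \<in># M) \<and>
         (3 * 2 ^ i \<le> N \<and> N \<le> 4 * 2 ^ i \<longrightarrow> fb (Suc i) \<in># M)"
proof -
  show ?thesis using assms(1) unfolding ginv_def
proof (elim disjE exE conjE)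
  fix j c0 c1 assume M: "M = replicate_mset c0 (fb j) + replicate_mset c1 (fb (Suc j))"
  have c: "c0 + c1 = 2" using arg_cong[OF M, of size] assms(2) by simp
  have N: "N = c0 * 2^j + c1 * (2 * 2^j)" using assms(3) M unfolding sl_def by simp
  have mem: "fb i \<in># M \<longleftrightarrow> (0 < c0 \<and> i = j) \<or> (0 < c1 \<and> i = Suc j)"
    "fb (Suc i) \<in># M \<longleftrightarrow> (0 < c0 \<and> Suc i = j) \<or> (0 < c1 \<and> i = j)" using M by auto
  have "c0 = 0 \<and> c1 = 2 \<or> c0 = 1 \<and> c1 = 1 \<or> c0 = 2 \<and> c1 = 0" using c by auto
  then show ?thesis unfolding mem N by (rule arA)
next
  fix j c0 c1 R assume M: "M = add_mset R (replicate_mset c0 (fb j) + replicate_mset c1 (fb (Suc j)))"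
    and R: "2 ^ j < leaves R" "leaves R < 2 ^ Suc j"
  have c: "c0 + c1 = 1" using arg_cong[OF M, of size] assms(2) by simp
  have N: "N = leaves R + c0 * 2^j + c1 * (2 * 2^j)" using assms(3) M unfolding sl_def by simp
  have mem: "(0 < c0 \<and> i = j) \<or> (0 < c1 \<and> i = Suc j) \<Longrightarrow> fb i \<in># M"
    "(0 < c0 \<and> Suc i = j) \<or> (0 < c1 \<and> i = j) \<Longrightarrow> fb (Suc i) \<in># M" using M by auto
  have "c0 = 0 \<and> c1 = 1 \<or> c0 = 1 \<and> c1 = 0" using c by auto
  then show ?thesis unfolding N by (rule arB[OF _ R mem])
qed
qed

lemma final_tree:
  assumes "gfb_tree N T" "N \<ge> 2"
  shows "(2 * 2 ^ i \<le> N \<and> N \<le> 3 * 2 ^ i \<longrightarrow> has_mps T (fb i)) \<and>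
         (3 * 2 ^ i \<le> N \<and> N \<le> 4 * 2 ^ i \<longrightarrow> has_mps T (fb (Suc i)))"
proof -
  have g0: "ginv (replicate_mset N BLeaf)" unfolding ginv_def
    by (rule disjI1, rule exI[of _ 0], rule exI[of _ N], rule exI[of _ 0]) simp
  have s0: "sl (replicate_mset N BLeaf) = N" unfolding sl_def by simp
  have r: "gfb_step\<^sup>*\<^sup>* (replicate_mset N BLeaf) {#T#}" using assms(1) gfb_tree_def by simp
  then show ?thesis
  proof (cases rule: rtranclp.cases)
    case rtrancl_refl
    then have "size (replicate_mset N BLeaf) = size {#T#}" by simp
    then show ?thesis using assms(2) by simp
  next
    case (rtrancl_into_rtrancl M)
    have gM: "ginv M" "sl M = N" using reach_inv[OF rtrancl_into_rtrancl(1) g0] s0 by auto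
    from rtrancl_into_rtrancl(2) show ?thesis
    proof cases
      case (1 u v)
      define K where "K = M - {#u#} - {#v#}"
      have eq: "{#T#} = add_mset (BNode u v) K" using 1 K_def by blast
      have hu: "u \<in># M" using 1 by blast
      have hv: "v \<in># M - {#u#}" using 1 by blast
      have d: "M = add_mset u (add_mset v K)" using decomp[OF hu hv] K_def by blast
      have e: "K = {#}" "T = BNode u v" using eq by (simp_all add: single_eq_add_mset)
      have M2: "M = {#u, v#}" using d e by simp
      have hm: "has_mps T S" if "S \<in># M" for S
      proof -
        have "S = u \<or> S = v" using that M2 by simp
        then show ?thesis using e(2) iso_refl[of S] by (cases T) auto
      qed
      have ft: "(2 * 2 ^ i \<le> N \<and> N \<le> 3 * 2 ^ i \<longrightarrow> fb i \<in># M) \<and>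
         (3 * 2 ^ i \<le> N \<and> N \<le> 4 * 2 ^ i \<longrightarrow> fb (Suc i) \<in># M)"
        by (rule final_two[OF gM(1) M2 gM(2)])
      show ?thesis using ft hm by blast
    qed
  qed
qed

lemma gfb1:
  assumes "gfb_tree 1 T" shows "T = BLeaf"
proof -
  have "gfb_step\<^sup>*\<^sup>* {#BLeaf#} {#T#}" using assms by (simp add: gfb_tree_def)
  then show ?thesis
  proof (cases rule: converse_rtranclpE)
    case base then show ?thesis by simp
  next
    case (step y) from step(1) show ?thesis by cases auto
  qed
qed

lemma has_mps_leaf: "has_mps BLeaf (fb 0)"
  by (simp add: iso_refl)

lemma ceil_facts:
  assumes "n \<ge> (2::nat)" "k = nat \<lceil>log 2 (real n)\<rceil>"
  shows "k \<ge> 1" "2 powr (real k - 1) < real n" "real n \<le> 2 powr (real k)"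
proof -
  define L where "L = log 2 (real n)"
  have Lpos: "L > 0" using assms(1) by (simp add: L_def)
  have kL: "real k = of_int \<lceil>L\<rceil>" using assms(2) Lpos unfolding L_def by simp
  have c1: "of_int \<lceil>L\<rceil> - 1 < L" "L \<le> of_int \<lceil>L\<rceil>" by linarith+
  show "k \<ge> 1" using kL Lpos c1 by linarith
  have nL: "real n = 2 powr L" using assms(1) unfolding L_def by simp
  show "2 powr (real k - 1) < real n" unfolding nL using c1 kL by simp
  show "real n \<le> 2 powr (real k)" unfolding nL using c1 kL by simp
qed

theorem corollary1:
  fixes n k :: nat and T1 T2 T3 :: btree
  assumes "n \<ge> 2"
    and "k = nat \<lceil>log 2 (real n)\<rceil>"
    and "real n \<noteq> 3 * 2 powr (real k - 2)"
    and "gfb_tree (n - 1) T1" and "gfb_tree n T2" and "gfb_tree (n + 1) T3"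
  shows "(2 powr (real k - 1) < real n \<and> real n < 3 * 2 powr (real k - 2) \<longrightarrow>
            has_mps T1 (fb (k - 2)) \<and> has_mps T2 (fb (k - 2)) \<and> has_mps T3 (fb (k - 2)))
       \<and> (3 * 2 powr (real k - 2) < real n \<and> real n \<le> 2 powr (real k) \<longrightarrow>
            has_mps T1 (fb (k - 1)) \<and> has_mps T2 (fb (k - 1)) \<and> has_mps T3 (fb (k - 1)))"
proof (cases "n = 2")
  case True
  then have k: "k = 1" using assms(2) by simp
  have "\<not> (real n < 3 * 2 powr (real k - 2))" using True k by (simp add: powr_minus)
  moreover have "gfb_tree 1 T1" using assms(4) True by simp
  then have "has_mps T1 (fb 0)" using gfb1 has_mps_leaf by blast
  moreover have "has_mps T2 (fb 0)" using final_tree[OF assms(5), of 0] True by simp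
  moreover have "has_mps T3 (fb 0)" using final_tree[OF assms(6), of 0] True by simp
  ultimately show ?thesis using k by simp
next
  case False
  note cf = ceil_facts[OF assms(1,2)]
  have "k \<ge> 2"
  proof (rule ccontr)
    assume "\<not> k \<ge> 2"
    then have "k = 1" using cf(1) by simp
    then show False using cf(3) assms(1) False by simp
  qed
  then obtain j where kj: "k = j + 2" using le_Suc_ex by (metis add.commute)
  have p1: "2 powr (real k - 1) = real (2 * 2 ^ j)"
    unfolding kj by (simp add: powr_realpow[symmetric] powr_add)
  have p2: "3 * 2 powr (real k - 2) = real (3 * 2 ^ j)"
    unfolding kj by (simp add: powr_realpow[symmetric])
  have p3: "2 powr (real k) = real (4 * 2 ^ j)"
    unfolding kj by (simp add: powr_realpow[symmetric] powr_add)
  have k2: "k - 2 = j" "k - 1 = Suc j" using kj by simp_all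
  have pos: "(0::nat) < 2 ^ j" by simp
  have A: "2 * 2 ^ j < n \<and> n < 3 * 2 ^ j \<longrightarrow>
            has_mps T1 (fb j) \<and> has_mps T2 (fb j) \<and> has_mps T3 (fb j)"
  proof
    assume h: "2 * 2 ^ j < n \<and> n < 3 * 2 ^ j"
    have n1: "2 \<le> n - 1" using h pos by linarith
    have "has_mps T1 (fb j)" using final_tree[OF assms(4) n1, of j] h by auto
    moreover have "has_mps T2 (fb j)" using final_tree[OF assms(5), of j] h n1 by auto
    moreover have "has_mps T3 (fb j)" using final_tree[OF assms(6), of j] h n1 by auto
    ultimately show "has_mps T1 (fb j) \<and> has_mps T2 (fb j) \<and> has_mps T3 (fb j)" by blast
  qed
  have B: "3 * 2 ^ j < n \<and> n \<le> 4 * 2 ^ j \<longrightarrow>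
            has_mps T1 (fb (Suc j)) \<and> has_mps T2 (fb (Suc j)) \<and> has_mps T3 (fb (Suc j))"
  proof
    assume h: "3 * 2 ^ j < n \<and> n \<le> 4 * 2 ^ j"
    have n1: "2 \<le> n - 1" using h pos by linarith
    have "has_mps T3 (fb (Suc j))"
    proof (cases "n = 4 * 2 ^ j")
      case True
      then show ?thesis using final_tree[OF assms(6), of "Suc j"] n1 by auto
    next
      case False
      then show ?thesis using final_tree[OF assms(6), of j] h n1 by auto
    qed
    then show "has_mps T1 (fb (Suc j)) \<and> has_mps T2 (fb (Suc j)) \<and> has_mps T3 (fb (Suc j))"
      using final_tree[OF assms(4) n1, of j] final_tree[OF assms(5), of j] h n1 by auto
  qed
  show ?thesis unfolding p1 p2 p3 k2 of_nat_less_iff of_nat_le_iff using A B by blast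
qed

end
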